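(* Let $\Omega\subset\mathbb{R}^2$ be the open region bounded by a triangle positioned so that one vertex is at the origin and the opposite side lies on the vertical line $\{x=\ell\}$ for some $\ell>0$ (so that $\Omega=\{(x,y):0<x<\ell,\ \tfrac{b_1}{\ell}x<y<\tfrac{b_2}{\ell}x\}$ for some real $b_1<b_2$). Let $L$ be the length of the longest side of the triangle. Let $u\in H^1_0(\Omega)\cap H^s(\Omega)$ for every $s$. Then \[ \|u\|_{L^2(\Omega)}\le L\sqrt{e-1}\,\|\partial_x u\|_{L^2(\Omega)}. \] *)

theory Defs
  imports "HOL-Analysis.Analysis"
begin

definition px :: "(real \<times> real \<Rightarrow> real) \<Rightarrow> real \<times> real \<Rightarrow> real" where
  "px f = (\<lambda>(x, y). deriv (\<lambda>t. f (t, y)) x)"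

definition py :: "(real \<times> real \<Rightarrow> real) \<Rightarrow> real \<times> real \<Rightarrow> real" where
  "py f = (\<lambda>(x, y). deriv (\<lambda>t. f (x, t)) y)"

definition iter_pd :: "bool list \<Rightarrow> (real \<times> real \<Rightarrow> real) \<Rightarrow> real \<times> real \<Rightarrow> real" where
  "iter_pd ds f = foldr (\<lambda>d h. if d then px h else py h) ds f"

definition smooth2 :: "(real \<times> real \<Rightarrow> real) \<Rightarrow> bool" where
  "smooth2 f \<longleftrightarrow> (\<forall>ds. continuous_on UNIV (iter_pd ds f) \<and>
     (\<forall>x y. (\<lambda>t. iter_pd ds f (t, y)) differentiable (at x) \<and>
            (\<lambda>t. iter_pd ds f (x, t)) differentiable (at y)))"

definition test_fun :: "(real \<times> real) set \<Rightarrow> (real \<times> real \<Rightarrow> real) \<Rightarrow> bool" where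
  "test_fun \<Omega> \<phi> \<longleftrightarrow> smooth2 \<phi> \<and> compact (closure {p. \<phi> p \<noteq> 0}) \<and>
     closure {p. \<phi> p \<noteq> 0} \<subseteq> \<Omega>"

definition Dxy :: "nat \<Rightarrow> nat \<Rightarrow> (real \<times> real \<Rightarrow> real) \<Rightarrow> real \<times> real \<Rightarrow> real" where
  "Dxy i j f = (px ^^ i) ((py ^^ j) f)"

definition L2 :: "(real \<times> real) set \<Rightarrow> (real \<times> real \<Rightarrow> real) \<Rightarrow> bool" where
  "L2 \<Omega> f \<longleftrightarrow> set_borel_measurable lborel \<Omega> f \<and> set_integrable lborel \<Omega> (\<lambda>p. (f p)\<^sup>2)"

definition L2norm :: "(real \<times> real) set \<Rightarrow> (real \<times> real \<Rightarrow> real) \<Rightarrow> real" where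
  "L2norm \<Omega> f = sqrt (LINT p:\<Omega>|lborel. (f p)\<^sup>2)"

definition weak_deriv :: "(real \<times> real) set \<Rightarrow> nat \<Rightarrow> nat \<Rightarrow> (real \<times> real \<Rightarrow> real) \<Rightarrow> (real \<times> real \<Rightarrow> real) \<Rightarrow> bool" where
  "weak_deriv \<Omega> i j u v \<longleftrightarrow>
     (\<forall>\<phi>. test_fun \<Omega> \<phi> \<longrightarrow>
        set_integrable lborel \<Omega> (\<lambda>p. u p * Dxy i j \<phi> p) \<and>
        set_integrable lborel \<Omega> (\<lambda>p. v p * \<phi> p) \<and>
        (LINT p:\<Omega>|lborel. u p * Dxy i j \<phi> p) = (-1) ^ (i + j) * (LINT p:\<Omega>|lborel. v p * \<phi> p))"

text \<open>\<open>u \<in> H\<^sup>s(\<Omega>)\<close> for every s: all weak derivatives of all orders exist and lie in \<open>L\<^sup>2(\<Omega>)\<close>.\<close>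
definition H_all :: "(real \<times> real) set \<Rightarrow> (real \<times> real \<Rightarrow> real) \<Rightarrow> bool" where
  "H_all \<Omega> u \<longleftrightarrow> L2 \<Omega> u \<and> (\<forall>i j. \<exists>v. L2 \<Omega> v \<and> weak_deriv \<Omega> i j u v)"

definition H10 :: "(real \<times> real) set \<Rightarrow> (real \<times> real \<Rightarrow> real) \<Rightarrow> bool" where
  "H10 \<Omega> u \<longleftrightarrow> (\<exists>ux uy. L2 \<Omega> u \<and> L2 \<Omega> ux \<and> L2 \<Omega> uy \<and>
      weak_deriv \<Omega> 1 0 u ux \<and> weak_deriv \<Omega> 0 1 u uy \<and>
      (\<exists>\<phi>s. (\<forall>n. test_fun \<Omega> (\<phi>s n)) \<and>
         (\<lambda>n. L2norm \<Omega> (\<lambda>p. \<phi>s n p - u p)) \<longlonglongrightarrow> 0 \<and>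
         (\<lambda>n. L2norm \<Omega> (\<lambda>p. px (\<phi>s n) p - ux p)) \<longlonglongrightarrow> 0 \<and>
         (\<lambda>n. L2norm \<Omega> (\<lambda>p. py (\<phi>s n) p - uy p)) \<longlonglongrightarrow> 0))"

end

theory Submission
  imports Defs
begin


lemma sbm_mult:
  fixes f g :: "real \<times> real \<Rightarrow> real"
  assumes "set_borel_measurable lborel S f" "set_borel_measurable lborel S g"
  shows "set_borel_measurable lborel S (\<lambda>p. f p * g p)"
proof -
  have "(\<lambda>x. indicator S x *\<^sub>R (f x * g x)) = (\<lambda>x. (indicator S x *\<^sub>R f x) * (indicator S x *\<^sub>R g x))"
    by (rule ext) (simp split: split_indicator)
  then show ?thesis using assms unfolding set_borel_measurable_def by simp
qed

lemma sbm_diff: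
  fixes f g :: "real \<times> real \<Rightarrow> real"
  assumes "set_borel_measurable lborel S f" "set_borel_measurable lborel S g"
  shows "set_borel_measurable lborel S (\<lambda>p. f p - g p)"
proof -
  have "(\<lambda>x. indicator S x *\<^sub>R (f x - g x)) = (\<lambda>x. (indicator S x *\<^sub>R f x) - (indicator S x *\<^sub>R g x))"
    by (rule ext) (simp split: split_indicator)
  then show ?thesis using assms unfolding set_borel_measurable_def by simp
qed

lemma sbm_add:
  fixes f g :: "real \<times> real \<Rightarrow> real"
  assumes "set_borel_measurable lborel S f" "set_borel_measurable lborel S g"
  shows "set_borel_measurable lborel S (\<lambda>p. f p + g p)"
proof -
  have "(\<lambda>x. indicator S x *\<^sub>R (f x + g x)) = (\<lambda>x. (indicator S x *\<^sub>R f x) + (indicator S x *\<^sub>R g x))"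
    by (rule ext) (simp split: split_indicator)
  then show ?thesis using assms unfolding set_borel_measurable_def by simp
qed

lemma L2_prod:
  assumes "L2 S f" "L2 S g"
  shows "set_integrable lborel S (\<lambda>p. f p * g p)"
proof -
  have f2: "set_integrable lborel S (\<lambda>p. (f p)\<^sup>2)" and g2: "set_integrable lborel S (\<lambda>p. (g p)\<^sup>2)"
    and mf: "set_borel_measurable lborel S f" and mg: "set_borel_measurable lborel S g"
    using assms unfolding L2_def by blast+
  have i: "set_integrable lborel S (\<lambda>p. (f p)\<^sup>2 + (g p)\<^sup>2)"
    by (rule set_integral_add(1)[OF f2 g2])
  show ?thesis
  proof (rule set_integrable_bound[OF i])
    show "set_borel_measurable lborel S (\<lambda>p. f p * g p)"
      by (rule sbm_mult[OF mf mg])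
    have "norm (f p * g p) \<le> norm ((f p)\<^sup>2 + (g p)\<^sup>2)" for p
    proof -
      have "0 \<le> (\<bar>f p\<bar> - \<bar>g p\<bar>)\<^sup>2" by simp
      then have "2 * \<bar>f p\<bar> * \<bar>g p\<bar> \<le> (f p)\<^sup>2 + (g p)\<^sup>2"
        by (simp add: power2_eq_square algebra_simps)
      moreover have "\<bar>f p\<bar> * \<bar>g p\<bar> \<ge> 0" by simp
      ultimately have h: "\<bar>f p\<bar> * \<bar>g p\<bar> \<le> (f p)\<^sup>2 + (g p)\<^sup>2" by linarith
      have "(f p)\<^sup>2 + (g p)\<^sup>2 \<ge> 0" by simp
      then show ?thesis using h by (simp add: abs_mult abs_of_nonneg)
    qed
    then show "AE x in lborel. x \<in> S \<longrightarrow> norm (f x * g x) \<le> norm ((f x)\<^sup>2 + (g x)\<^sup>2)" by simp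
  qed
qed

lemma L2_diff:
  assumes "L2 S f" "L2 S g"
  shows "L2 S (\<lambda>p. f p - g p)"
proof -
  have f2: "set_integrable lborel S (\<lambda>p. (f p)\<^sup>2)" and g2: "set_integrable lborel S (\<lambda>p. (g p)\<^sup>2)"
    and mf: "set_borel_measurable lborel S f" and mg: "set_borel_measurable lborel S g"
    using assms unfolding L2_def by blast+
  have pr: "set_integrable lborel S (\<lambda>p. 2 * (f p * g p))"
    by (rule set_integrable_mult_right[OF L2_prod[OF assms]])
  have "set_integrable lborel S (\<lambda>p. (f p)\<^sup>2 - 2 * (f p * g p) + (g p)\<^sup>2)"
    by (rule set_integral_add(1)[OF set_integral_diff(1)[OF f2 pr] g2])
  moreover have "(\<lambda>p. (f p)\<^sup>2 - 2 * (f p * g p) + (g p)\<^sup>2) = (\<lambda>p. (f p - g p)\<^sup>2)"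
    by (rule ext) (simp add: power2_eq_square algebra_simps)
  ultimately have "set_integrable lborel S (\<lambda>p. (f p - g p)\<^sup>2)" by simp
  then show ?thesis unfolding L2_def using sbm_diff[OF mf mg] by blast
qed

lemma L2_add:
  assumes "L2 S f" "L2 S g"
  shows "L2 S (\<lambda>p. f p + g p)"
proof -
  have f2: "set_integrable lborel S (\<lambda>p. (f p)\<^sup>2)" and g2: "set_integrable lborel S (\<lambda>p. (g p)\<^sup>2)"
    and mf: "set_borel_measurable lborel S f" and mg: "set_borel_measurable lborel S g"
    using assms unfolding L2_def by blast+
  have pr: "set_integrable lborel S (\<lambda>p. 2 * (f p * g p))"
    by (rule set_integrable_mult_right[OF L2_prod[OF assms]])
  have "set_integrable lborel S (\<lambda>p. (f p)\<^sup>2 + 2 * (f p * g p) + (g p)\<^sup>2)"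
    by (rule set_integral_add(1)[OF set_integral_add(1)[OF f2 pr] g2])
  moreover have "(\<lambda>p. (f p)\<^sup>2 + 2 * (f p * g p) + (g p)\<^sup>2) = (\<lambda>p. (f p + g p)\<^sup>2)"
    by (rule ext) (simp add: power2_eq_square algebra_simps)
  ultimately have "set_integrable lborel S (\<lambda>p. (f p + g p)\<^sup>2)" by simp
  then show ?thesis unfolding L2_def using sbm_add[OF mf mg] by blast
qed

lemma L2norm_sq:
  assumes "L2 S f"
  shows "(L2norm S f)\<^sup>2 = (LINT p:S|lborel. (f p)\<^sup>2)" "L2norm S f \<ge> 0"
proof -
  have "0 \<le> (LINT p:S|lborel. (f p)\<^sup>2)"
    unfolding set_lebesgue_integral_def by (rule Bochner_Integration.integral_nonneg) simp
  then show "(L2norm S f)\<^sup>2 = (LINT p:S|lborel. (f p)\<^sup>2)" "L2norm S f \<ge> 0"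
    unfolding L2norm_def by auto
qed

lemma CS:
  assumes "L2 S f" "L2 S g"
  shows "\<bar>LINT p:S|lborel. f p * g p\<bar> \<le> L2norm S f * L2norm S g"
proof -
  define A where "A = L2norm S f"
  define B where "B = L2norm S g"
  have A2: "A\<^sup>2 = (LINT p:S|lborel. (f p)\<^sup>2)" "A \<ge> 0" using L2norm_sq[OF assms(1)] A_def by auto
  have B2: "B\<^sup>2 = (LINT p:S|lborel. (g p)\<^sup>2)" "B \<ge> 0" using L2norm_sq[OF assms(2)] B_def by auto
  have key: "\<bar>LINT p:S|lborel. f p * g p\<bar> \<le> (t * A\<^sup>2 + B\<^sup>2 / t) / 2" if t: "t > 0" for t
  proof -
    have f2: "set_integrable lborel S (\<lambda>p. (f p)\<^sup>2)" and g2: "set_integrable lborel S (\<lambda>p. (g p)\<^sup>2)"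
      using assms unfolding L2_def by auto
    have i3: "set_integrable lborel S (\<lambda>p. t * (f p)\<^sup>2)" by (rule set_integrable_mult_right[OF f2])
    have i4: "set_integrable lborel S (\<lambda>p. (g p)\<^sup>2 / t)" by (rule set_integrable_divide[OF g2])
    have ib: "set_integrable lborel S (\<lambda>p. (t * (f p)\<^sup>2 + (g p)\<^sup>2 / t) / 2)"
      by (rule set_integrable_divide[OF set_integral_add(1)[OF i3 i4]])
    have "(LINT p:S|lborel. (t * (f p)\<^sup>2 + (g p)\<^sup>2 / t) / 2) = (LINT p:S|lborel. (t * (f p)\<^sup>2 + (g p)\<^sup>2 / t)) / 2"
      by (rule set_integral_divide_zero)
    also have "\<dots> = ((LINT p:S|lborel. t * (f p)\<^sup>2) + (LINT p:S|lborel. (g p)\<^sup>2 / t)) / 2"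
      by (simp only: set_integral_add(2)[OF i3 i4])
    also have "\<dots> = (t * A\<^sup>2 + B\<^sup>2 / t) / 2"
      by (simp only: set_integral_divide_zero set_integral_mult_right A2(1) B2(1))
    finally have eq: "(LINT p:S|lborel. (t * (f p)\<^sup>2 + (g p)\<^sup>2 / t) / 2) = (t * A\<^sup>2 + B\<^sup>2 / t) / 2" .
    have pw: "\<bar>f p * g p\<bar> \<le> (t * (f p)\<^sup>2 + (g p)\<^sup>2 / t) / 2" for p
    proof -
      have "0 \<le> (t * \<bar>f p\<bar> - \<bar>g p\<bar>)\<^sup>2" by simp
      then have "2 * t * \<bar>f p\<bar> * \<bar>g p\<bar> \<le> t\<^sup>2 * (f p)\<^sup>2 + (g p)\<^sup>2"
        by (simp add: power2_eq_square algebra_simps)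
      then have h: "\<bar>f p * g p\<bar> \<le> (t\<^sup>2 * (f p)\<^sup>2 + (g p)\<^sup>2) / (2 * t)"
        using t by (simp add: pos_le_divide_eq abs_mult algebra_simps)
      have e: "(t * (f p)\<^sup>2 + (g p)\<^sup>2 / t) / 2 = (t\<^sup>2 * (f p)\<^sup>2 + (g p)\<^sup>2) / (2 * t)"
        using t by (simp add: field_simps power2_eq_square)
      show ?thesis using h e by linarith
    qed
    have pw1: "f p * g p \<le> (t * (f p)\<^sup>2 + (g p)\<^sup>2 / t) / 2" for p
      using pw[of p] abs_ge_self[of "f p * g p"] by linarith
    have pw2: "- (f p * g p) \<le> (t * (f p)\<^sup>2 + (g p)\<^sup>2 / t) / 2" for p
      using pw[of p] abs_ge_minus_self[of "f p * g p"] by linarith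
    have i1: "set_integrable lborel S (\<lambda>p. f p * g p)" by (rule L2_prod[OF assms])
    have m1: "(LINT p:S|lborel. f p * g p) \<le> (LINT p:S|lborel. (t * (f p)\<^sup>2 + (g p)\<^sup>2 / t) / 2)"
      by (rule set_integral_mono[OF i1 ib pw1])
    have i1': "set_integrable lborel S (\<lambda>p. (-1) * (f p * g p))" by (rule set_integrable_mult_right[OF i1])
    have m2: "(LINT p:S|lborel. (-1) * (f p * g p)) \<le> (LINT p:S|lborel. (t * (f p)\<^sup>2 + (g p)\<^sup>2 / t) / 2)"
      by (rule set_integral_mono[OF i1' ib]) (metis pw2 mult_minus1)
    have m3: "(LINT p:S|lborel. (-1) * (f p * g p)) = - (LINT p:S|lborel. f p * g p)"
      by (simp only: set_integral_mult_right)
    show ?thesis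
    proof (rule abs_leI)
      show "(LINT p:S|lborel. f p * g p) \<le> (t * A\<^sup>2 + B\<^sup>2 / t) / 2" using m1 eq by linarith
      show "- (LINT p:S|lborel. f p * g p) \<le> (t * A\<^sup>2 + B\<^sup>2 / t) / 2" using m2 m3 eq by linarith
    qed
  qed
  show ?thesis unfolding A_def[symmetric] B_def[symmetric]
  proof (rule field_le_epsilon)
    fix e :: real assume e: "e > 0"
    define d where "d = min 1 (e / (A + B + 1))"
    have ABp: "A + B + 1 > 0" using A2 B2 by simp
    have d: "d > 0" "d \<le> 1" using e ABp by (auto simp: d_def)
    have "d * (A + B + 1) \<le> e"
    proof (cases "e / (A + B + 1) \<le> 1")
      case True then have "d = e / (A + B + 1)" by (simp add: d_def)
      then show ?thesis using ABp by simp
    next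
      case False then have "d = 1" "1 < e / (A + B + 1)" by (auto simp: d_def)
      then show ?thesis using ABp by (simp add: field_simps)
    qed
    note d = d this
    define t where "t = (B + d) / (A + d)"
    have t: "t > 0" using d A2 B2 by (simp add: t_def)
    have "t * A\<^sup>2 \<le> (B + d) * (A + d)"
    proof -
      have "A\<^sup>2 \<le> (A + d)\<^sup>2" using d A2 by (intro power_mono) auto
      then have "A\<^sup>2 / (A + d) \<le> A + d" using d A2 by (simp add: power2_eq_square field_simps)
      then have "(B + d) * (A\<^sup>2 / (A + d)) \<le> (B + d) * (A + d)" using d B2 by (intro mult_left_mono) auto
      then show ?thesis by (simp add: t_def)
    qed
    moreover have "B\<^sup>2 / t \<le> (B + d) * (A + d)"
    proof -
      have "B\<^sup>2 \<le> (B + d)\<^sup>2" using d B2 by (intro power_mono) auto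
      then have "B\<^sup>2 / (B + d) \<le> B + d" using d B2 by (simp add: power2_eq_square field_simps)
      then have "(A + d) * (B\<^sup>2 / (B + d)) \<le> (A + d) * (B + d)" using d A2 by (intro mult_left_mono) auto
      then show ?thesis by (simp add: t_def mult.commute)
    qed
    ultimately have "t * A\<^sup>2 + B\<^sup>2 / t \<le> (B + d) * (A + d) + (B + d) * (A + d)" by (rule add_mono)
    then have "(t * A\<^sup>2 + B\<^sup>2 / t) / 2 \<le> ((B + d) * (A + d) + (B + d) * (A + d)) / 2"
      by (rule divide_right_mono) simp
    also have "\<dots> = (B + d) * (A + d)" by simp
    finally have "(t * A\<^sup>2 + B\<^sup>2 / t) / 2 \<le> (B + d) * (A + d)" .
    then have "\<bar>LINT p:S|lborel. f p * g p\<bar> \<le> (B + d) * (A + d)" by (rule order_trans[OF key[OF t]])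
    also have "\<dots> = A * B + d * (A + B + d)" by (simp add: algebra_simps)
    also have "\<dots> \<le> A * B + d * (A + B + 1)"
    proof -
      have "d * (A + B + d) \<le> d * (A + B + 1)" using d(1,2) by (intro mult_left_mono) auto
      then show ?thesis by linarith
    qed
    also have "\<dots> \<le> A * B + e" using d(3) by linarith
    finally show "\<bar>LINT p:S|lborel. f p * g p\<bar> \<le> A * B + e" .
  qed
qed

lemma Mink:
  assumes "L2 S f" "L2 S g"
  shows "L2norm S (\<lambda>p. f p + g p) \<le> L2norm S f + L2norm S g"
proof -
  have fg: "L2 S (\<lambda>p. f p + g p)" by (rule L2_add[OF assms])
  have f2: "set_integrable lborel S (\<lambda>p. (f p)\<^sup>2)" and g2: "set_integrable lborel S (\<lambda>p. (g p)\<^sup>2)"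
    using assms unfolding L2_def by blast+
  have i2: "set_integrable lborel S (\<lambda>p. 2 * (f p * g p))"
    by (rule set_integrable_mult_right[OF L2_prod[OF assms]])
  have fe: "(\<lambda>p. (f p + g p)\<^sup>2) = (\<lambda>p. ((f p)\<^sup>2 + 2 * (f p * g p)) + (g p)\<^sup>2)"
    by (rule ext) (simp add: power2_eq_square algebra_simps)
  have "(L2norm S (\<lambda>p. f p + g p))\<^sup>2 = (LINT p:S|lborel. (f p + g p)\<^sup>2)"
    by (rule L2norm_sq(1)[OF fg])
  also have "\<dots> = (LINT p:S|lborel. ((f p)\<^sup>2 + 2 * (f p * g p)) + (g p)\<^sup>2)"
    by (simp only: fe)
  also have "\<dots> = (LINT p:S|lborel. (f p)\<^sup>2 + 2 * (f p * g p)) + (LINT p:S|lborel. (g p)\<^sup>2)"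
    by (rule set_integral_add(2)[OF set_integral_add(1)[OF f2 i2] g2])
  also have "\<dots> = (LINT p:S|lborel. (f p)\<^sup>2) + (LINT p:S|lborel. 2 * (f p * g p)) + (LINT p:S|lborel. (g p)\<^sup>2)"
    by (simp only: set_integral_add(2)[OF f2 i2])
  also have "\<dots> = (L2norm S f)\<^sup>2 + 2 * (LINT p:S|lborel. f p * g p) + (L2norm S g)\<^sup>2"
    by (simp only: L2norm_sq(1)[OF assms(1)] L2norm_sq(1)[OF assms(2)] set_integral_mult_right)
  also have "\<dots> \<le> (L2norm S f)\<^sup>2 + 2 * (L2norm S f * L2norm S g) + (L2norm S g)\<^sup>2"
    using CS[OF assms] by linarith
  also have "\<dots> = (L2norm S f + L2norm S g)\<^sup>2" by (simp add: power2_eq_square algebra_simps)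
  finally have "(L2norm S (\<lambda>p. f p + g p))\<^sup>2 \<le> (L2norm S f + L2norm S g)\<^sup>2" .
  moreover have "0 \<le> L2norm S f + L2norm S g"
    using L2norm_sq(2)[OF assms(1)] L2norm_sq(2)[OF assms(2)] by simp
  ultimately show ?thesis by (rule power2_le_imp_le)
qed



lemma iter_pd_px: "iter_pd ds (px f) = iter_pd (ds @ [True]) f"
  by (simp add: iter_pd_def)

lemma smooth_px: "smooth2 f \<Longrightarrow> smooth2 (px f)"
  unfolding smooth2_def iter_pd_px by blast

lemma iter_pd_Nil: "iter_pd [] f = f" by (simp add: iter_pd_def)

lemma smooth_cont: "smooth2 f \<Longrightarrow> continuous_on UNIV f"
  unfolding smooth2_def using iter_pd_Nil[of f] by metis

lemma smooth_cont_px: "smooth2 f \<Longrightarrow> continuous_on UNIV (px f)"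
  using smooth_cont smooth_px by blast

lemma smooth_diffx: "smooth2 f \<Longrightarrow> (\<lambda>t. f (t, y)) differentiable (at x)"
  unfolding smooth2_def using iter_pd_Nil[of f] by metis

lemma smooth_deriv: "smooth2 f \<Longrightarrow> ((\<lambda>t. f (t, y)) has_real_derivative px f (x, y)) (at x)"
  using smooth_diffx[of f y x] DERIV_deriv_iff_real_differentiable by (simp add: px_def)

lemma px_zero:
  assumes "p \<notin> closure {q. f q \<noteq> 0}"
  shows "px f p = 0"
proof -
  obtain x y where p: "p = (x, y)" by fastforce
  have "open (- closure {q. f q \<noteq> 0})" by (rule open_Compl[OF closed_closure])
  then obtain e where e: "e > 0" "ball p e \<subseteq> - closure {q. f q \<noteq> 0}"
    using assms open_contains_ball by blast
  have z: "f (t, y) = 0" if "t \<in> ball x e" for t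
  proof -
    have "dist (x, y) (t, y) = dist x t" by (simp add: dist_Pair_Pair)
    then have "(t, y) \<in> ball p e" using that p unfolding mem_ball by simp
    then have "(t, y) \<notin> closure {q. f q \<noteq> 0}" using e(2) by blast
    show ?thesis
    proof (rule ccontr)
      assume "f (t, y) \<noteq> 0"
      then have "(t, y) \<in> {q. f q \<noteq> 0}" by simp
      then have "(t, y) \<in> closure {q. f q \<noteq> 0}" by (rule subsetD[OF closure_subset])
      with \<open>(t, y) \<notin> closure {q. f q \<noteq> 0}\<close> show False by contradiction
    qed
  qed
  have "((\<lambda>t. 0::real) has_field_derivative 0) (at x)" by simp
  then have "((\<lambda>t. f (t, y)) has_field_derivative 0) (at x)"
    by (rule has_field_derivative_transform_within_open[where S="ball x e", OF _ open_ball])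
      (simp add: e(1), metis z)
  then show ?thesis by (simp add: p px_def DERIV_imp_deriv)
qed

lemma test_px:
  assumes "test_fun \<Omega> \<phi>"
  shows "test_fun \<Omega> (px \<phi>)"
proof -
  have sm: "smooth2 \<phi>" and cp: "compact (closure {p. \<phi> p \<noteq> 0})" and ss: "closure {p. \<phi> p \<noteq> 0} \<subseteq> \<Omega>"
    using assms unfolding test_fun_def by blast+
  have s0: "{p. px \<phi> p \<noteq> 0} \<subseteq> closure {p. \<phi> p \<noteq> 0}"
  proof
    fix p assume "p \<in> {p. px \<phi> p \<noteq> 0}"
    then have "px \<phi> p \<noteq> 0" by simp
    then show "p \<in> closure {p. \<phi> p \<noteq> 0}" using px_zero[of p \<phi>] by (rule contrapos_np)
  qed
  have sub: "closure {p. px \<phi> p \<noteq> 0} \<subseteq> closure {p. \<phi> p \<noteq> 0}"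
    by (rule closure_minimal[OF s0 closed_closure])
  have "compact (closure {p. \<phi> p \<noteq> 0} \<inter> closure {p. px \<phi> p \<noteq> 0})"
    by (rule compact_Int_closed[OF cp closed_closure])
  moreover have "closure {p. \<phi> p \<noteq> 0} \<inter> closure {p. px \<phi> p \<noteq> 0} = closure {p. px \<phi> p \<noteq> 0}"
    using sub by blast
  ultimately have c2: "compact (closure {p. px \<phi> p \<noteq> 0})" by simp
  have s2: "closure {p. px \<phi> p \<noteq> 0} \<subseteq> \<Omega>" using sub ss by blast
  show ?thesis unfolding test_fun_def using smooth_px[OF sm] c2 s2 by blast
qed

lemma sint_cont:
  fixes g :: "real \<times> real \<Rightarrow> real"
  assumes "continuous_on UNIV g" "compact C" "C \<subseteq> \<Omega>" "\<And>p. p \<notin> C \<Longrightarrow> g p = 0"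
  shows "set_integrable lborel \<Omega> g"
proof -
  have "integrable lborel (\<lambda>x. indicator C x *\<^sub>R g x)"
    by (rule borel_integrable_compact[OF assms(2)]) (rule continuous_on_subset[OF assms(1)], simp)
  moreover have "(\<lambda>x. indicator C x *\<^sub>R g x) = (\<lambda>x. indicator \<Omega> x *\<^sub>R g x)"
  proof
    fix x show "indicator C x *\<^sub>R g x = indicator \<Omega> x *\<^sub>R g x"
    proof (cases "x \<in> C")
      case True then have "x \<in> \<Omega>" using assms(3) by blast
      with True show ?thesis by simp
    next
      case False then have "g x = 0" using assms(4) by blast
      then show ?thesis by simp
    qed
  qed
  ultimately show ?thesis unfolding set_integrable_def by simp
qed

lemma L2_cont:
  fixes g :: "real \<times> real \<Rightarrow> real"
  assumes "continuous_on UNIV g" "compact C" "C \<subseteq> \<Omega>" "\<And>p. p \<notin> C \<Longrightarrow> g p = 0"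
  shows "L2 \<Omega> g"
proof -
  have "set_integrable lborel \<Omega> g" by (rule sint_cont[OF assms])
  then have m: "set_borel_measurable lborel \<Omega> g"
    unfolding set_integrable_def set_borel_measurable_def by (rule borel_measurable_integrable)
  have "set_integrable lborel \<Omega> (\<lambda>p. (g p)\<^sup>2)"
    by (rule sint_cont[OF continuous_on_power[OF assms(1)] assms(2,3)]) (simp add: assms(4))
  then show ?thesis using m unfolding L2_def by blast
qed

lemma lint_eq_box:
  fixes g :: "real \<times> real \<Rightarrow> real"
  assumes "continuous_on UNIV g" "compact C" "C \<subseteq> \<Omega>" "C \<subseteq> K" "\<And>p. p \<notin> C \<Longrightarrow> g p = 0"
  shows "(LINT p:\<Omega>|lborel. g p) = integral K g"
proof -
  have e1: "(LINT p:\<Omega>|lborel. g p) = integral \<Omega> g"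
    by (rule set_borel_integral_eq_integral(2)[OF sint_cont[OF assms(1,2,3,5)]])
  have f1: "(\<lambda>x. if x \<in> \<Omega> then g x else 0) = g"
  proof
    fix x show "(if x \<in> \<Omega> then g x else 0) = g x" using assms(3) assms(5)[of x] by (cases "x \<in> C") auto
  qed
  have f2: "(\<lambda>x. if x \<in> K then g x else 0) = g"
  proof
    fix x show "(if x \<in> K then g x else 0) = g x" using assms(4) assms(5)[of x] by (cases "x \<in> C") auto
  qed
  have "integral \<Omega> g = integral UNIV g"
    using integral_restrict_UNIV[of \<Omega> g] f1 by simp
  moreover have "integral K g = integral UNIV g"
    using integral_restrict_UNIV[of K g] f2 by simp
  ultimately show ?thesis using e1 by simp
qed



lemma poinc_box:
  fixes \<phi> :: "real \<times> real \<Rightarrow> real" and l c d :: real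
  assumes l: "l > 0" and sm: "smooth2 \<phi>" and z0: "\<And>y. \<phi> (0, y) = 0" and zl: "\<And>y. \<phi> (l, y) = 0"
  shows "integral (cbox (0, c) (l, d)) (\<lambda>p. (\<phi> p)\<^sup>2) \<le> l\<^sup>2 * integral (cbox (0, c) (l, d)) (\<lambda>p. (px \<phi> p)\<^sup>2)"
proof -
  define K where "K = cbox (0::real, c) (l, d)"
  define h where "h = (\<lambda>p. (\<phi> p)\<^sup>2 + (2 * fst p - l) * \<phi> p * px \<phi> p)"
  have c\<phi>: "continuous_on UNIV \<phi>" by (rule smooth_cont[OF sm])
  have cpx: "continuous_on UNIV (px \<phi>)" by (rule smooth_cont_px[OF sm])
  have ch: "continuous_on UNIV h" unfolding h_def
    by (intro continuous_on_add continuous_on_mult continuous_on_power continuous_on_diff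
        continuous_on_const continuous_on_fst continuous_on_id c\<phi> cpx)
  have inner: "integral (cbox 0 l) (\<lambda>x. h (x, y)) = 0" for y
  proof -
    define F where "F = (\<lambda>t. (t - l / 2) * (\<phi> (t, y) * \<phi> (t, y)))"
    have der: "(F has_real_derivative h (t, y)) (at t)" for t
    proof -
      have d: "((\<lambda>t. \<phi> (t, y)) has_real_derivative px \<phi> (t, y)) (at t)" by (rule smooth_deriv[OF sm])
      have d1: "((\<lambda>t. t - l / 2) has_real_derivative 1 - 0) (at t)"
        by (rule DERIV_diff[OF DERIV_ident DERIV_const])
      have d2: "((\<lambda>t. \<phi> (t, y) * \<phi> (t, y)) has_real_derivative \<phi> (t, y) * px \<phi> (t, y) + px \<phi> (t, y) * \<phi> (t, y)) (at t)"
        by (rule DERIV_mult'[OF d d])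
      have "(F has_real_derivative (t - l / 2) * (\<phi> (t, y) * px \<phi> (t, y) + px \<phi> (t, y) * \<phi> (t, y)) + (1 - 0) * (\<phi> (t, y) * \<phi> (t, y))) (at t)"
        unfolding F_def by (rule DERIV_mult'[OF d1 d2])
      moreover have "(t - l / 2) * (\<phi> (t, y) * px \<phi> (t, y) + px \<phi> (t, y) * \<phi> (t, y)) + (1 - 0) * (\<phi> (t, y) * \<phi> (t, y)) = h (t, y)"
        unfolding h_def by (simp add: power2_eq_square algebra_simps)
      ultimately show ?thesis by simp
    qed
    have "((\<lambda>x. h (x, y)) has_integral (F l - F 0)) {0..l}"
    proof (rule fundamental_theorem_of_calculus)
      show "0 \<le> l" using l by simp
      fix x assume "x \<in> {0..l}"
      show "(F has_vector_derivative h (x, y)) (at x within {0..l})"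
        using der[of x] unfolding has_real_derivative_iff_has_vector_derivative
        by (rule has_vector_derivative_at_within)
    qed
    moreover have "F l - F 0 = 0" unfolding F_def using z0[of y] zl[of y] by simp
    ultimately show ?thesis by (simp add: integral_unique)
  qed
  have cK: "continuous_on K h" by (rule continuous_on_subset[OF ch]) simp
  have hh: "(\<lambda>(x, y). h (x, y)) = h" by simp
  have "integral K h = integral (cbox 0 l) (\<lambda>x. integral (cbox c d) (\<lambda>y. h (x, y)))"
    unfolding K_def by (rule integral_prod_continuous) (use cK in \<open>simp add: K_def\<close>)
  also have "\<dots> = integral (cbox c d) (\<lambda>y. integral (cbox 0 l) (\<lambda>x. h (x, y)))"
    by (rule integral_swap_continuous[where f="\<lambda>x y. h (x, y)"]) (use cK in \<open>simp add: K_def hh\<close>)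
  also have "\<dots> = 0" by (simp only: inner integral_0)
  finally have hK: "integral K h = 0" .
  have pw: "(1/2) * (\<phi> p)\<^sup>2 \<le> h p + (l\<^sup>2 / 2) * (px \<phi> p)\<^sup>2" if "p \<in> K" for p
  proof -
    obtain x y where p: "p = (x, y)" by fastforce
    have x: "0 \<le> x" "x \<le> l" using that p unfolding K_def by (auto simp: cbox_Pair_eq)
    define s where "s = 2 * x - l"
    define a where "a = \<phi> p"
    define b where "b = px \<phi> p"
    have "\<bar>s\<bar> \<le> l" using x unfolding s_def by simp
    then have "s\<^sup>2 \<le> l\<^sup>2" by (metis abs_le_square_iff abs_of_pos l)
    then have "0 \<le> (l\<^sup>2 - s\<^sup>2) * b\<^sup>2" by simp
    moreover have "0 \<le> (a + s * b)\<^sup>2" by simp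
    moreover have "h p + (l\<^sup>2 / 2) * b\<^sup>2 - (1/2) * a\<^sup>2 = (a + s * b)\<^sup>2 / 2 + (l\<^sup>2 - s\<^sup>2) * b\<^sup>2 / 2"
      unfolding h_def a_def b_def s_def p by (simp add: power2_eq_square field_simps)
    ultimately show ?thesis unfolding a_def b_def by linarith
  qed
  have i1: "(\<lambda>p. (1/2) * (\<phi> p)\<^sup>2) integrable_on K" unfolding K_def
    by (rule integrable_continuous, rule continuous_on_subset[of UNIV])
       (intro continuous_on_mult continuous_on_power continuous_on_const c\<phi>, simp)
  have i2: "(\<lambda>p. (px \<phi> p)\<^sup>2) integrable_on K" unfolding K_def
    by (rule integrable_continuous, rule continuous_on_subset[of UNIV])
       (intro continuous_on_power cpx, simp)
  have i3: "h integrable_on K" unfolding K_def by (rule integrable_continuous) (use cK in \<open>simp add: K_def\<close>)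
  have i4: "(\<lambda>p. (l\<^sup>2 / 2) * (px \<phi> p)\<^sup>2) integrable_on K" using integrable_on_cmult_left[OF i2] by simp
  have "integral K (\<lambda>p. (1/2) * (\<phi> p)\<^sup>2) \<le> integral K (\<lambda>p. h p + (l\<^sup>2 / 2) * (px \<phi> p)\<^sup>2)"
    by (rule integral_le[OF i1 integrable_add[OF i3 i4] pw])
  also have "\<dots> = integral K h + integral K (\<lambda>p. (l\<^sup>2 / 2) * (px \<phi> p)\<^sup>2)"
    by (rule integral_add[OF i3 i4])
  also have "\<dots> = (l\<^sup>2 / 2) * integral K (\<lambda>p. (px \<phi> p)\<^sup>2)"
    using hK by (simp only: Henstock_Kurzweil_Integration.integral_mult_right add_0)
  finally have "(1/2) * integral K (\<lambda>p. (\<phi> p)\<^sup>2) \<le> (l\<^sup>2 / 2) * integral K (\<lambda>p. (px \<phi> p)\<^sup>2)"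
    by (simp only: Henstock_Kurzweil_Integration.integral_mult_right)
  then show ?thesis unfolding K_def by simp
qed



lemma test_zero:
  assumes "p \<notin> closure {q. f q \<noteq> 0}"
  shows "f p = 0"
proof (rule ccontr)
  assume "f p \<noteq> 0"
  then have "p \<in> {q. f q \<noteq> 0}" by simp
  then have "p \<in> closure {q. f q \<noteq> 0}" by (rule subsetD[OF closure_subset])
  with assms show False by contradiction
qed

lemma test_L2:
  assumes "test_fun \<Omega> \<phi>"
  shows "L2 \<Omega> \<phi>"
proof -
  have sm: "smooth2 \<phi>" and cC: "compact (closure {p. \<phi> p \<noteq> 0})" and CO: "closure {p. \<phi> p \<noteq> 0} \<subseteq> \<Omega>"
    using assms unfolding test_fun_def by blast+
  show ?thesis by (rule L2_cont[OF smooth_cont[OF sm] cC CO test_zero[of _ \<phi>]])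
qed

lemma poinc:
  fixes \<phi> :: "real \<times> real \<Rightarrow> real"
  assumes l: "l > 0" and Os: "\<Omega> \<subseteq> {p. 0 < fst p \<and> fst p < l}" and tf: "test_fun \<Omega> \<phi>"
  shows "(LINT p:\<Omega>|lborel. (\<phi> p)\<^sup>2) \<le> l\<^sup>2 * (LINT p:\<Omega>|lborel. (px \<phi> p)\<^sup>2)"
proof -
  define C where "C = closure {p. \<phi> p \<noteq> 0}"
  have sm: "smooth2 \<phi>" and cC: "compact C" and CO: "C \<subseteq> \<Omega>"
    using tf unfolding test_fun_def C_def by blast+
  have zC: "\<phi> p = 0" if "p \<notin> C" for p using test_zero that unfolding C_def by blast
  have zpx: "px \<phi> p = 0" if "p \<notin> C" for p using px_zero that unfolding C_def by blast
  obtain B where B: "\<forall>p\<in>C. norm p \<le> B" using compact_imp_bounded[OF cC] bounded_iff by blast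
  define K where "K = cbox (0::real, -B) (l, B)"
  have CK: "C \<subseteq> K"
  proof
    fix p assume pC: "p \<in> C"
    obtain a b where p: "p = (a, b)" by fastforce
    have "0 < a" "a < l" using pC CO Os p by auto
    moreover have "norm b \<le> B" using norm_snd_le[of b a] B pC p by fastforce
    ultimately show "p \<in> K" unfolding K_def p cbox_Pair_eq by (auto simp: abs_le_iff)
  qed
  have z0: "\<phi> (0, y) = 0" for y
  proof -
    have "(0, y) \<notin> \<Omega>" using Os by auto
    then show ?thesis using zC CO by blast
  qed
  have zl: "\<phi> (l, y) = 0" for y
  proof -
    have "(l, y) \<notin> \<Omega>" using Os by auto
    then show ?thesis using zC CO by blast
  qed
  have c1: "continuous_on UNIV (\<lambda>p. (\<phi> p)\<^sup>2)" by (rule continuous_on_power[OF smooth_cont[OF sm]])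
  have c2: "continuous_on UNIV (\<lambda>p. (px \<phi> p)\<^sup>2)" by (rule continuous_on_power[OF smooth_cont_px[OF sm]])
  have e1: "(LINT p:\<Omega>|lborel. (\<phi> p)\<^sup>2) = integral K (\<lambda>p. (\<phi> p)\<^sup>2)"
    by (rule lint_eq_box[OF c1 cC CO CK]) (simp add: zC)
  have e2: "(LINT p:\<Omega>|lborel. (px \<phi> p)\<^sup>2) = integral K (\<lambda>p. (px \<phi> p)\<^sup>2)"
    by (rule lint_eq_box[OF c2 cC CO CK]) (simp add: zpx)
  show ?thesis unfolding e1 e2 K_def by (rule poinc_box[OF l sm z0 zl])
qed

theorem mainTheorem3:
  fixes l b1 b2 L :: real and \<Omega> :: "(real \<times> real) set"
    and u ux :: "real \<times> real \<Rightarrow> real"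
  assumes "l > 0" and "b1 < b2"
    and "\<Omega> = {(x, y). 0 < x \<and> x < l \<and> b1 / l * x < y \<and> y < b2 / l * x}"
    and "L = Max {dist (0, 0) (l, b1), dist (0, 0) (l, b2), dist (l, b1) (l, b2)}"
    and "H10 \<Omega> u" and "H_all \<Omega> u"
    and "L2 \<Omega> ux" and "weak_deriv \<Omega> 1 0 u ux"
  shows "L2norm \<Omega> u \<le> L * sqrt (exp 1 - 1) * L2norm \<Omega> ux"
proof -
  note l = assms(1)
  note Lux = assms(7)
  note wd = assms(8)
  obtain ux0 uy \<phi>s where Lu: "L2 \<Omega> u" and Lux0: "L2 \<Omega> ux0" and wd0: "weak_deriv \<Omega> 1 0 u ux0"
    and tfs: "\<And>n. test_fun \<Omega> (\<phi>s n)"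
    and ca: "(\<lambda>n. L2norm \<Omega> (\<lambda>p. \<phi>s n p - u p)) \<longlonglongrightarrow> 0"
    and cb: "(\<lambda>n. L2norm \<Omega> (\<lambda>p. px (\<phi>s n) p - ux0 p)) \<longlonglongrightarrow> 0"
    using assms(5) unfolding H10_def by blast
  have Os: "\<Omega> \<subseteq> {p. 0 < fst p \<and> fst p < l}" using assms(3) by auto
  define A where "A = L2norm \<Omega> u"
  define B where "B = L2norm \<Omega> ux"
  define X where "X = L2norm \<Omega> ux0"
  define a where "a = (\<lambda>n. L2norm \<Omega> (\<lambda>p. \<phi>s n p - u p))"
  define b where "b = (\<lambda>n. L2norm \<Omega> (\<lambda>p. px (\<phi>s n) p - ux0 p))"
  have B0: "B \<ge> 0" unfolding B_def by (rule L2norm_sq(2)[OF Lux])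
  have X0: "X \<ge> 0" unfolding X_def by (rule L2norm_sq(2)[OF Lux0])
  have Nb: "L2norm \<Omega> (px (\<phi>s n)) \<le> X + b n" for n
  proof -
    have Lp: "L2 \<Omega> (px (\<phi>s n))" by (rule test_L2[OF test_px[OF tfs]])
    have "L2norm \<Omega> (\<lambda>p. ux0 p + (px (\<phi>s n) p - ux0 p)) \<le> X + b n"
      unfolding X_def b_def by (rule Mink[OF Lux0 L2_diff[OF Lp Lux0]])
    moreover have "(\<lambda>p. ux0 p + (px (\<phi>s n) p - ux0 p)) = px (\<phi>s n)" by auto
    ultimately show ?thesis by simp
  qed
  have step1: "X\<^sup>2 \<le> B * (X + b n) + X * b n" for n
  proof -
    have tp: "test_fun \<Omega> (px (\<phi>s n))" by (rule test_px[OF tfs])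
    have Lp: "L2 \<Omega> (px (\<phi>s n))" by (rule test_L2[OF tp])
    have D: "Dxy 1 0 (px (\<phi>s n)) = px (px (\<phi>s n))" by (simp add: Dxy_def)
    have w1: "(LINT p:\<Omega>|lborel. u p * Dxy 1 0 (px (\<phi>s n)) p) = (-1) ^ (1 + 0) * (LINT p:\<Omega>|lborel. ux p * px (\<phi>s n) p)"
      using wd tp unfolding weak_deriv_def by blast
    have w2: "(LINT p:\<Omega>|lborel. u p * Dxy 1 0 (px (\<phi>s n)) p) = (-1) ^ (1 + 0) * (LINT p:\<Omega>|lborel. ux0 p * px (\<phi>s n) p)"
      using wd0 tp unfolding weak_deriv_def by blast
    have eq: "(LINT p:\<Omega>|lborel. ux p * px (\<phi>s n) p) = (LINT p:\<Omega>|lborel. ux0 p * px (\<phi>s n) p)"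
      using w1 w2 by simp
    have Ld: "L2 \<Omega> (\<lambda>p. px (\<phi>s n) p - ux0 p)" by (rule L2_diff[OF Lp Lux0])
    have i1: "set_integrable lborel \<Omega> (\<lambda>p. ux0 p * px (\<phi>s n) p)" by (rule L2_prod[OF Lux0 Lp])
    have i2: "set_integrable lborel \<Omega> (\<lambda>p. ux0 p * (px (\<phi>s n) p - ux0 p))" by (rule L2_prod[OF Lux0 Ld])
    have fe: "(\<lambda>p. (ux0 p)\<^sup>2) = (\<lambda>p. ux0 p * px (\<phi>s n) p - ux0 p * (px (\<phi>s n) p - ux0 p))"
      by (rule ext) (simp add: power2_eq_square algebra_simps)
    have "X\<^sup>2 = (LINT p:\<Omega>|lborel. (ux0 p)\<^sup>2)" unfolding X_def by (rule L2norm_sq(1)[OF Lux0])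
    also have "\<dots> = (LINT p:\<Omega>|lborel. ux0 p * px (\<phi>s n) p - ux0 p * (px (\<phi>s n) p - ux0 p))"
      by (simp only: fe)
    also have "\<dots> = (LINT p:\<Omega>|lborel. ux0 p * px (\<phi>s n) p) - (LINT p:\<Omega>|lborel. ux0 p * (px (\<phi>s n) p - ux0 p))"
      by (rule set_integral_diff(2)[OF i1 i2])
    also have "\<dots> \<le> B * (X + b n) + X * b n"
    proof -
      have "(LINT p:\<Omega>|lborel. ux0 p * px (\<phi>s n) p) \<le> B * L2norm \<Omega> (px (\<phi>s n))"
        using CS[OF Lux Lp] eq unfolding B_def by simp
      also have "\<dots> \<le> B * (X + b n)" by (rule mult_left_mono[OF Nb B0])
      finally have 1: "(LINT p:\<Omega>|lborel. ux0 p * px (\<phi>s n) p) \<le> B * (X + b n)" .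
      have 2: "\<bar>LINT p:\<Omega>|lborel. ux0 p * (px (\<phi>s n) p - ux0 p)\<bar> \<le> X * b n"
        using CS[OF Lux0 Ld] unfolding X_def b_def by simp
      show ?thesis using 1 2 by linarith
    qed
    finally show ?thesis .
  qed
  have XB: "X \<le> B"
  proof -
    have lim: "(\<lambda>n. B * (X + b n) + X * b n) \<longlonglongrightarrow> B * (X + 0) + X * 0"
      using cb unfolding b_def by (intro tendsto_intros)
    have "X\<^sup>2 \<le> B * (X + 0) + X * 0"
      by (rule LIMSEQ_le_const[OF lim]) (use step1 in blast)
    then have "X * X \<le> B * X" by (simp add: power2_eq_square)
    then show ?thesis using X0 B0
      by (metis less_eq_real_def mult_le_cancel_right_pos)
  qed
  have step2: "A \<le> l * (X + b n) + a n" for n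
  proof -
    have Lphi: "L2 \<Omega> (\<phi>s n)" by (rule test_L2[OF tfs])
    have "L2norm \<Omega> (\<lambda>p. \<phi>s n p + (u p - \<phi>s n p)) \<le> L2norm \<Omega> (\<phi>s n) + L2norm \<Omega> (\<lambda>p. u p - \<phi>s n p)"
      by (rule Mink[OF Lphi L2_diff[OF Lu Lphi]])
    moreover have "(\<lambda>p. \<phi>s n p + (u p - \<phi>s n p)) = u" by auto
    moreover have "L2norm \<Omega> (\<lambda>p. u p - \<phi>s n p) = a n"
      unfolding a_def L2norm_def by (simp add: power2_commute)
    ultimately have 1: "A \<le> L2norm \<Omega> (\<phi>s n) + a n" unfolding A_def by simp
    have "L2norm \<Omega> (\<phi>s n) \<le> sqrt (l\<^sup>2 * (LINT p:\<Omega>|lborel. (px (\<phi>s n) p)\<^sup>2))"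
      unfolding L2norm_def by (rule real_sqrt_le_mono[OF poinc[OF l Os tfs]])
    also have "\<dots> = l * L2norm \<Omega> (px (\<phi>s n))"
      unfolding L2norm_def using l by (simp add: real_sqrt_mult)
    also have "\<dots> \<le> l * (X + b n)" by (rule mult_left_mono[OF Nb]) (use l in simp)
    finally show ?thesis using 1 by linarith
  qed
  have AX: "A \<le> l * X"
  proof -
    have lim: "(\<lambda>n. l * (X + b n) + a n) \<longlonglongrightarrow> l * (X + 0) + 0"
      using ca cb unfolding a_def b_def by (intro tendsto_intros)
    have "A \<le> l * (X + 0) + 0"
      by (rule LIMSEQ_le_const[OF lim]) (use step2 in blast)
    then show ?thesis by simp
  qed
  have lL: "l \<le> L"
  proof -
    have "l \<le> sqrt (l\<^sup>2 + b1\<^sup>2)" by (rule real_sqrt_sum_squares_ge1)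
    also have "\<dots> = dist (0, 0) (l, b1)" by (simp add: dist_Pair_Pair dist_real_def)
    also have "\<dots> \<le> L" unfolding assms(4) by (rule Max_ge) auto
    finally show ?thesis .
  qed
  have s1: "1 \<le> sqrt (exp 1 - 1)"
  proof -
    have "1 + 1 \<le> exp (1::real)" by (rule exp_ge_add_one_self)
    then show ?thesis by simp
  qed
  have "l \<le> L * sqrt (exp 1 - 1)"
  proof -
    have "L * 1 \<le> L * sqrt (exp 1 - 1)" using lL l s1 by (intro mult_left_mono) auto
    then show ?thesis using lL by simp
  qed
  then have "l * B \<le> L * sqrt (exp 1 - 1) * B" using B0 by (rule mult_right_mono)
  moreover have "A \<le> l * B" using AX XB l by (meson mult_left_mono order_trans less_imp_le)
  ultimately show ?thesis unfolding A_def B_def by linarith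
qed

end
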